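(* For every $u\in K$, $$\overline V=W:=\{v\in X:\ (Bv)(x)\ge0 \text{ for all } x\in\omega_c\},$$ where the closure of $V$ is taken in $X$.
   Context: Fix $T>1$. $X=H^1_0(0,T)$, $U=\{1+v:v\in X\}$, $(Bw)(x)=\int_x^{x+1}w$ for $x\in[0,T-1]$, $K=\{u\in U: Bu\ge0 \text{ on }[0,T-1]\}$, $\omega_c=\{x\in[0,T-1]:(Bu)(x)=0\}$. For fixed $u$, $V=\{v\in X:\ \exists(\varepsilon_n)\subset(0,\infty),\ \varepsilon_n\to0,\ B(u+\varepsilon_nv)\ge0 \text{ on }[0,T-1]\ \forall n\}$. *)

theory Defs
  imports "HOL-Analysis.Analysis"
begin

text \<open>Elements of H^1_0(0,T) are represented by their continuous representative,
  a function real => real, extended by 0 outside [0,T].  The function g is an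
  L^2 weak derivative of v on [0,T].\<close>

definition weak_deriv_L2 :: "real \<Rightarrow> (real \<Rightarrow> real) \<Rightarrow> (real \<Rightarrow> real) \<Rightarrow> bool" where
  "weak_deriv_L2 T v g \<longleftrightarrow>
     g \<in> borel_measurable lborel \<and>
     set_integrable lborel {0..T} (\<lambda>t. (g t)^2) \<and>
     (\<forall>x\<in>{0..T}. v x = v 0 + (LINT t:{0..x}|lborel. g t))"

definition H10 :: "real \<Rightarrow> (real \<Rightarrow> real) set" where
  "H10 T = {v. (\<forall>x. x \<notin> {0..T} \<longrightarrow> v x = 0) \<and> v 0 = 0 \<and> v T = 0 \<and>
                (\<exists>g. weak_deriv_L2 T v g)}"

definition h1_norm_sq :: "real \<Rightarrow> (real \<Rightarrow> real) \<Rightarrow> (real \<Rightarrow> real) \<Rightarrow> real" where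
  "h1_norm_sq T v g = (LINT t:{0..T}|lborel. (v t)^2) + (LINT t:{0..T}|lborel. (g t)^2)"

definition H10_closure :: "real \<Rightarrow> (real \<Rightarrow> real) set \<Rightarrow> (real \<Rightarrow> real) set" where
  "H10_closure T S = {v \<in> H10 T. \<forall>e>0. \<exists>w\<in>S. \<exists>g.
      weak_deriv_L2 T (\<lambda>t. v t - w t) g \<and> h1_norm_sq T (\<lambda>t. v t - w t) g < e^2}"

definition Uset :: "real \<Rightarrow> (real \<Rightarrow> real) set" where
  "Uset T = {u. \<exists>v\<in>H10 T. u = (\<lambda>x. 1 + v x)}"

definition Bop :: "(real \<Rightarrow> real) \<Rightarrow> real \<Rightarrow> real" where
  "Bop w x = (LINT t:{x..x+1}|lborel. w t)"

definition Kset :: "real \<Rightarrow> (real \<Rightarrow> real) set" where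
  "Kset T = {u \<in> Uset T. \<forall>x\<in>{0..T-1}. Bop u x \<ge> 0}"

definition omega_c :: "real \<Rightarrow> (real \<Rightarrow> real) \<Rightarrow> real set" where
  "omega_c T u = {x \<in> {0..T-1}. Bop u x = 0}"

definition Vset :: "real \<Rightarrow> (real \<Rightarrow> real) \<Rightarrow> (real \<Rightarrow> real) set" where
  "Vset T u = {v \<in> H10 T. \<exists>\<epsilon>::nat \<Rightarrow> real. (\<forall>n. \<epsilon> n > 0) \<and> \<epsilon> \<longlonglongrightarrow> 0 \<and>
      (\<forall>n. \<forall>x\<in>{0..T-1}. Bop (\<lambda>t. u t + \<epsilon> n * v t) x \<ge> 0)}"

definition Wset :: "real \<Rightarrow> (real \<Rightarrow> real) \<Rightarrow> (real \<Rightarrow> real) set" where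
  "Wset T u = {v \<in> H10 T. \<forall>x\<in>omega_c T u. Bop v x \<ge> 0}"

end

theory Submission
  imports Defs
begin

lemma abs_le_1_sq: "\<bar>x::real\<bar> \<le> 1 + x^2"
proof (cases "\<bar>x\<bar> \<le> 1")
  case True then show ?thesis by (simp add: add_increasing2)
next
  case False
  then have "\<bar>x\<bar> * 1 \<le> \<bar>x\<bar> * \<bar>x\<bar>" by (intro mult_left_mono) auto
  then show ?thesis by (simp add: power2_eq_square abs_mult_self_eq)
qed

lemma sq_int_imp_int:
  fixes g :: "real \<Rightarrow> real"
  assumes "g \<in> borel_measurable lborel" "set_integrable lborel {a..b} (\<lambda>t. (g t)^2)"
  shows "set_integrable lborel {a..b} g"
proof (rule set_integrable_bound[where f="\<lambda>t. 1 + (g t)^2"])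
  have "set_integrable lborel {a..b} (\<lambda>t. 1::real)"
    by (rule borel_integrable_atLeastAtMost') simp
  then show "set_integrable lborel {a..b} (\<lambda>t. 1 + (g t)^2)"
    using assms(2) by (rule set_integral_add)
  show "set_borel_measurable lborel {a..b} g"
    unfolding set_borel_measurable_def using assms(1) by measurable
  show "AE x in lborel. x \<in> {a..b} \<longrightarrow> norm (g x) \<le> norm (1 + (g x)^2)"
    using abs_le_1_sq by auto
qed

lemma H10_cont:
  assumes "v \<in> H10 T" "T \<ge> 0"
  shows "continuous_on UNIV v"
proof -
  obtain g where g: "weak_deriv_L2 T v g" and v0: "\<forall>x. x \<notin> {0..T} \<longrightarrow> v x = 0" "v 0 = 0" "v T = 0"
    using assms(1) unfolding H10_def by auto
  have gi: "set_integrable lborel {0..T} g"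
    using g sq_int_imp_int unfolding weak_deriv_L2_def by blast
  then have gI: "g integrable_on {0..T}" by (rule set_borel_integral_eq_integral)
  have eq: "v x = integral {0..x} g" if "x \<in> {0..T}" for x
  proof -
    have "set_integrable lborel {0..x} g"
      using gi by (rule set_integrable_subset) (use that in auto)
    then have "(LINT t:{0..x}|lborel. g t) = integral {0..x} g"
      by (rule set_borel_integral_eq_integral)
    then show ?thesis using g that v0 unfolding weak_deriv_L2_def by auto
  qed
  have c1: "continuous_on {0..T} v"
    using indefinite_integral_continuous_1[OF gI] by (rule continuous_on_eq) (use eq in auto)
  have c2: "continuous_on {..0} v"
  proof (rule continuous_on_eq[where f="\<lambda>_. 0"])
    show "\<And>x. x \<in> {..0} \<Longrightarrow> 0 = v x" using v0 by (metis atLeastAtMost_iff atMost_iff order_antisym_conv)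
  qed simp
  have c3: "continuous_on {T..} v"
  proof (rule continuous_on_eq[where f="\<lambda>_. 0"])
    show "\<And>x. x \<in> {T..} \<Longrightarrow> 0 = v x" using v0 by (metis atLeastAtMost_iff atLeast_iff order_antisym_conv)
  qed simp
  have "continuous_on ({..0} \<union> {0..T} \<union> {T..}) v"
    by (intro continuous_on_closed_Un c1 c2 c3) auto
  moreover have "{..0} \<union> {0..T} \<union> {T..} = (UNIV::real set)" using assms(2) by auto
  ultimately show ?thesis by (metis abs_of_nonneg order_trans)
qed


lemma Bop_HK:
  assumes "continuous_on UNIV f"
  shows "Bop f x = integral {x..x+1} f"
  unfolding Bop_def
  by (rule set_borel_integral_eq_integral(2), rule borel_integrable_atLeastAtMost')
     (rule continuous_on_subset[OF assms], simp)

lemma cont_intI: "continuous_on UNIV f \<Longrightarrow> (f::real\<Rightarrow>real) integrable_on {a..b}"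
  by (rule integrable_continuous_interval, erule continuous_on_subset) simp

lemma Bop_lin:
  assumes "continuous_on UNIV a" "continuous_on UNIV b"
  shows "Bop (\<lambda>t. a t + c * b t) x = Bop a x + c * Bop b x"
proof -
  have "continuous_on UNIV (\<lambda>t. a t + c * b t)"
    using assms by (intro continuous_intros) auto
  moreover have "(\<lambda>t. c * b t) integrable_on {x..x+1}"
    using assms by (intro cont_intI continuous_intros) auto
  ultimately show ?thesis
    using assms by (simp add: Bop_HK integral_add cont_intI)
qed

lemma Bop_const1: "Bop (\<lambda>t. 1) x = 1"
  by (simp add: Bop_HK)

lemma Bop_cont:
  assumes "continuous_on UNIV f"
  shows "continuous_on {0..T-1} (Bop f)"
proof -
  have I: "f integrable_on {0..T}" by (rule cont_intI[OF assms])
  have e: "Bop f x = integral {0..x+1} f - integral {0..x} f" if "x \<in> {0..T-1}" for x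
  proof -
    have "integral {0..x} f + integral {x..x+1} f = integral {0..x+1} f"
      by (rule Henstock_Kurzweil_Integration.integral_combine) (use that cont_intI[OF assms] in auto)
    then show ?thesis using Bop_HK[OF assms] by simp
  qed
  have c: "continuous_on {0..T} (\<lambda>x. integral {0..x} f)"
    by (rule indefinite_integral_continuous_1[OF I])
  have "continuous_on {0..T-1} (\<lambda>x. integral {0..x+1} f - integral {0..x} f)"
  proof (intro continuous_intros)
    show "continuous_on {0..T - 1} (\<lambda>x. integral {0..x} f)"
      by (rule continuous_on_subset[OF c]) auto
    have "continuous_on {0..T-1} ((\<lambda>x. integral {0..x} f) \<circ> (\<lambda>x. x+1))"
      by (intro continuous_on_compose continuous_intros continuous_on_subset[OF c]) auto
    then show "continuous_on {0..T - 1} (\<lambda>x. integral {0..x + 1} f)" by (simp add: o_def)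
  qed
  then show ?thesis by (rule continuous_on_eq) (use e in auto)
qed


lemma wd_int:
  assumes "weak_deriv_L2 T v g" "x \<in> {0..T}"
  shows "set_integrable lborel {0..x} g"
proof -
  have "set_integrable lborel {0..T} g"
    using assms(1) sq_int_imp_int unfolding weak_deriv_L2_def by blast
  then show ?thesis by (rule set_integrable_subset) (use assms(2) in auto)
qed

lemma sq_bound: "\<bar>((x::real) + c * y)^2\<bar> \<le> \<bar>2 * x^2 + 2 * c^2 * y^2\<bar>"
proof -
  have "0 \<le> (x - c*y)^2" by simp
  then have "(x + c*y)^2 \<le> 2 * x^2 + 2 * c^2 * y^2" by (simp add: power2_eq_square algebra_simps)
  moreover have "0 \<le> (x + c*y)^2" by simp
  ultimately show ?thesis by (metis abs_of_nonneg order_trans)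
qed

lemma wd_comb:
  assumes a: "weak_deriv_L2 T a ga" and b: "weak_deriv_L2 T b gb"
  shows "weak_deriv_L2 T (\<lambda>t. a t + c * b t) (\<lambda>t. ga t + c * gb t)"
  unfolding weak_deriv_L2_def
proof (intro conjI ballI)
  have ma: "ga \<in> borel_measurable lborel" and mb: "gb \<in> borel_measurable lborel"
    using a b unfolding weak_deriv_L2_def by auto
  show m: "(\<lambda>t. ga t + c * gb t) \<in> borel_measurable lborel"
    using ma mb by simp
  have ia: "set_integrable lborel {0..T} (\<lambda>t. (ga t)^2)" and ib: "set_integrable lborel {0..T} (\<lambda>t. (gb t)^2)"
    using a b unfolding weak_deriv_L2_def by auto
  have i2: "set_integrable lborel {0..T} (\<lambda>t. 2 * (ga t)^2 + 2 * c^2 * (gb t)^2)"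
  proof (rule set_integral_add(1))
    show "set_integrable lborel {0..T} (\<lambda>t. 2 * (ga t)^2)"
      by (rule set_integrable_mult_right) (rule ia)
    show "set_integrable lborel {0..T} (\<lambda>t. 2 * c^2 * (gb t)^2)"
      by (rule set_integrable_mult_right) (rule ib)
  qed
  show "set_integrable lborel {0..T} (\<lambda>t. (ga t + c * gb t)^2)"
  proof (rule set_integrable_bound[OF i2])
    show "set_borel_measurable lborel {0..T} (\<lambda>t. (ga t + c * gb t)\<^sup>2)"
      unfolding set_borel_measurable_def using m by simp
    show "AE x in lborel. x \<in> {0..T} \<longrightarrow> norm ((ga x + c * gb x)\<^sup>2) \<le> norm (2 * (ga x)\<^sup>2 + 2 * c\<^sup>2 * (gb x)\<^sup>2)"
      by (intro AE_I2 impI) (simp only: real_norm_def sq_bound)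
  qed
  fix x assume x: "x \<in> {0..T}"
  have "(LINT t:{0..x}|lborel. ga t + c * gb t) = (LINT t:{0..x}|lborel. ga t) + c * (LINT t:{0..x}|lborel. gb t)"
  proof -
    have "set_integrable lborel {0..x} (\<lambda>t. c * gb t)"
      by (rule set_integrable_mult_right) (rule wd_int[OF b x])
    then show ?thesis
      using wd_int[OF a x] by (simp only: set_integral_add(2) set_integral_mult_right)
  qed
  moreover have "a x = a 0 + (LINT t:{0..x}|lborel. ga t)" "b x = b 0 + (LINT t:{0..x}|lborel. gb t)"
    using a b x unfolding weak_deriv_L2_def by blast+
  ultimately show "a x + c * b x = a 0 + c * b 0 + (LINT t:{0..x}|lborel. ga t + c * gb t)"
    by (simp only: distrib_left)
qed
lemma H10_comb:
  assumes "a \<in> H10 T" "b \<in> H10 T"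
  shows "(\<lambda>t. a t + c * b t) \<in> H10 T"
proof -
  obtain ga gb where "weak_deriv_L2 T a ga" "weak_deriv_L2 T b gb"
    using assms unfolding H10_def by auto
  then have "weak_deriv_L2 T (\<lambda>t. a t + c * b t) (\<lambda>t. ga t + c * gb t)" by (rule wd_comb)
  moreover have "\<forall>x. x \<notin> {0..T} \<longrightarrow> a x + c * b x = 0" "a 0 + c * b 0 = 0" "a T + c * b T = 0"
    using assms unfolding H10_def by auto
  ultimately show ?thesis unfolding H10_def by blast
qed

lemma wd_zero: "weak_deriv_L2 T (\<lambda>t. 0) (\<lambda>t. 0)"
  unfolding weak_deriv_L2_def by (simp add: set_integrable_def)

lemma wd_scale:
  assumes "weak_deriv_L2 T b gb"
  shows "weak_deriv_L2 T (\<lambda>t. c * b t) (\<lambda>t. c * gb t)"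
  using wd_comb[OF wd_zero assms, of c] by simp


lemma pt_bound:
  assumes "(e::real) > 0"
  shows "-(e/2) - y^2/(2*e) \<le> y"
proof -
  have "0 \<le> (y+e)^2/(2*e)" using assms by simp
  moreover have "(y+e)^2/(2*e) = y^2/(2*e) + y + e/2"
    using assms by (simp add: field_simps power2_eq_square)
  ultimately show ?thesis by linarith
qed

lemma LINT_HK:
  fixes f :: "real \<Rightarrow> real"
  assumes "continuous_on UNIV f"
  shows "(LINT t:{a..b}|lborel. f t) = integral {a..b} f"
  by (rule set_borel_integral_eq_integral(2), rule borel_integrable_atLeastAtMost')
     (rule continuous_on_subset[OF assms], simp)

lemma est:
  assumes d: "continuous_on UNIV d" and x: "0 \<le> x" "x + 1 \<le> T" and e: "e > 0"
    and n: "(LINT t:{0..T}|lborel. (d t)^2) < e^2"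
  shows "Bop d x > -e"
proof -
  have d2: "continuous_on UNIV (\<lambda>t. (d t)^2)" using d by (intro continuous_intros)
  have d3: "continuous_on UNIV (\<lambda>t. -(e/2) - (d t)^2/(2*e))" using d e by (intro continuous_intros) auto
  have n2: "integral {0..T} (\<lambda>t. (d t)^2) < e^2" using n LINT_HK[OF d2] by simp
  have s: "integral {x..x+1} (\<lambda>t. (d t)^2) \<le> integral {0..T} (\<lambda>t. (d t)^2)"
    by (rule integral_subset_le) (use x cont_intI[OF d2] in auto)
  have "integral {x..x+1} (\<lambda>t. -(e/2) - (d t)^2/(2*e)) \<le> integral {x..x+1} d"
    by (rule integral_le) (use cont_intI[OF d3] cont_intI[OF d] pt_bound[OF e] in auto)
  moreover have "integral {x..x+1} (\<lambda>t. -(e/2) - (d t)^2/(2*e)) = -(e/2) - integral {x..x+1} (\<lambda>t. (d t)^2) / (2*e)"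
  proof -
    have "integral {x..x+1} (\<lambda>t. -(e/2) - (d t)^2/(2*e)) = integral {x..x+1} (\<lambda>t. -(e/2)) - integral {x..x+1} (\<lambda>t. (d t)^2/(2*e))"
      by (rule integral_diff) (use d e in \<open>auto intro!: cont_intI continuous_intros\<close>)
    also have "integral {x..x+1} (\<lambda>t. (d t)^2/(2*e)) = integral {x..x+1} (\<lambda>t. (d t)^2) / (2*e)"
      by (rule integral_divide)
    finally show ?thesis by simp
  qed
  moreover have "integral {x..x+1} (\<lambda>t. (d t)^2) / (2*e) < e^2 / (2*e)"
    using s n2 e by (intro divide_strict_right_mono) auto
  moreover have "e^2 / (2*e) = e/2" using e by (simp add: power2_eq_square)
  ultimately show ?thesis using Bop_HK[OF d, of x] by linarith
qed

lemma key:
  fixes f p :: "real \<Rightarrow> real"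
  assumes S: "compact S" and cf: "continuous_on S f" and cp: "continuous_on S p"
    and f0: "\<forall>x\<in>S. f x \<ge> 0" and fp: "\<forall>x\<in>S. f x = 0 \<longrightarrow> p x > 0"
  shows "\<exists>\<epsilon>0>0. \<forall>\<epsilon>. 0 < \<epsilon> \<and> \<epsilon> \<le> \<epsilon>0 \<longrightarrow> (\<forall>x\<in>S. f x + \<epsilon> * p x \<ge> 0)"
proof -
  define C where "C = {x\<in>S. p x \<le> 0}"
  have "closed C" unfolding C_def
    using continuous_on_closed_Collect_le[OF cp continuous_on_const compact_imp_closed[OF S]] .
  then have cC: "compact C" using S unfolding C_def
    by (metis (no_types, lifting) C_def Int_absorb1 compact_Int_closed mem_Collect_eq subsetI)
  obtain M where M: "\<forall>x\<in>S. \<bar>p x\<bar> \<le> M"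
    using compact_imp_bounded[OF compact_continuous_image[OF cp S]] unfolding bounded_real by auto
  show ?thesis
  proof (cases "C = {}")
    case True
    then have "\<forall>x\<in>S. p x > 0" unfolding C_def by auto
    then show ?thesis using f0 by (intro exI[of _ 1]) (auto intro!: add_nonneg_nonneg)
  next
    case False
    obtain x0 where x0: "x0 \<in> C" "\<forall>y\<in>C. f x0 \<le> f y"
      using continuous_attains_inf[OF cC False continuous_on_subset[OF cf]] unfolding C_def by auto
    have c: "f x0 > 0" using x0(1) f0 fp unfolding C_def by force
    have M0: "M \<ge> 0" using M x0(1) unfolding C_def by force
    show ?thesis
    proof (intro exI[of _ "f x0 / (M+1)"] conjI allI impI ballI)
      show "f x0 / (M+1) > 0" using c M0 by simp
      fix \<epsilon> x assume h: "0 < \<epsilon> \<and> \<epsilon> \<le> f x0 / (M + 1)" and xS: "x \<in> S"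
      show "f x + \<epsilon> * p x \<ge> 0"
      proof (cases "p x > 0")
        case True then show ?thesis using h f0 xS by (simp add: add_nonneg_nonneg)
      next
        case False
        then have xC: "x \<in> C" unfolding C_def using xS by auto
        have "\<epsilon> * \<bar>p x\<bar> \<le> (f x0 / (M+1)) * M"
          using h M xS M0 by (intro mult_mono) auto
        also have "\<dots> < f x0" using c M0 by (simp add: field_simps)
        finally have "\<epsilon> * \<bar>p x\<bar> < f x0" .
        moreover have "- (\<epsilon> * \<bar>p x\<bar>) \<le> \<epsilon> * p x" using h by (simp add: abs_if)
        ultimately show ?thesis using x0(2) xC by force
      qed
    qed
  qed
qed


lemma sq_LINT_nonneg: "0 \<le> (LINT t:A|lborel. ((g t)::real)^2)"
  unfolding set_lebesgue_integral_def by (intro Bochner_Integration.integral_nonneg) (simp add: indicator_def)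

theorem mainTheorem6:
  fixes T :: real and u :: "real \<Rightarrow> real"
  assumes "T > 1" and "u \<in> Kset T"
  shows "H10_closure T (Vset T u) = Wset T u"
proof -
  obtain vu where vu: "vu \<in> H10 T" "u = (\<lambda>x. 1 + vu x)"
    using assms(2) unfolding Kset_def Uset_def by auto
  have uK: "\<forall>x\<in>{0..T-1}. Bop u x \<ge> 0" using assms(2) unfolding Kset_def by auto
  have T0: "T \<ge> 0" using assms(1) by simp
  have cvu: "continuous_on UNIV vu" by (rule H10_cont[OF vu(1) T0])
  have cu: "continuous_on UNIV u" unfolding vu(2) using cvu by (intro continuous_intros)
  have Bu: "Bop u x = 1 + Bop vu x" for x
  proof -
    have "Bop (\<lambda>t. 1 + 1 * vu t) x = Bop (\<lambda>t. 1) x + 1 * Bop vu x"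
      by (rule Bop_lin) (use cvu in auto)
    then show ?thesis using vu(2) Bop_const1 by simp
  qed
  show ?thesis
  proof (rule set_eqI, rule iffI)
    fix v assume v: "v \<in> H10_closure T (Vset T u)"
    have vH: "v \<in> H10 T" using v unfolding H10_closure_def by auto
    have cv: "continuous_on UNIV v" by (rule H10_cont[OF vH T0])
    have "Bop v x \<ge> 0" if x: "x \<in> omega_c T u" for x
    proof (rule ccontr)
      assume neg: "\<not> Bop v x \<ge> 0"
      define e where "e = - Bop v x"
      have e: "e > 0" using neg unfolding e_def by simp
      obtain w g where w: "w \<in> Vset T u" and wd: "weak_deriv_L2 T (\<lambda>t. v t - w t) g"
        and nrm: "h1_norm_sq T (\<lambda>t. v t - w t) g < e^2"
        using v e unfolding H10_closure_def by blast
      have wH: "w \<in> H10 T" using w unfolding Vset_def by auto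
      have cw: "continuous_on UNIV w" by (rule H10_cont[OF wH T0])
      obtain \<epsilon> :: "nat \<Rightarrow> real" where \<epsilon>: "\<forall>n. \<epsilon> n > 0" "\<forall>n. \<forall>x\<in>{0..T-1}. Bop (\<lambda>t. u t + \<epsilon> n * w t) x \<ge> 0"
        using w unfolding Vset_def by blast
      have xS: "x \<in> {0..T-1}" and Bux: "Bop u x = 0" using x unfolding omega_c_def by auto
      have "Bop (\<lambda>t. u t + \<epsilon> 0 * w t) x = Bop u x + \<epsilon> 0 * Bop w x"
        by (rule Bop_lin[OF cu cw])
      moreover have "0 \<le> Bop (\<lambda>t. u t + \<epsilon> 0 * w t) x" using \<epsilon>(2) xS by blast
      ultimately have "\<epsilon> 0 * Bop w x \<ge> 0" using Bux by linarith
      then have Bw: "Bop w x \<ge> 0" using \<epsilon>(1)[rule_format, of 0] by (simp add: zero_le_mult_iff)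
      have cd: "continuous_on UNIV (\<lambda>t. v t - w t)" using cv cw by (intro continuous_intros)
      have "(LINT t:{0..T}|lborel. (v t - w t)^2) < e^2"
        using nrm sq_LINT_nonneg[of "{0..T}" g] unfolding h1_norm_sq_def by linarith
      then have "Bop (\<lambda>t. v t - w t) x > -e"
        by (intro est[OF cd _ _ e]) (use xS in auto)
      moreover have "Bop (\<lambda>t. v t + (-1) * w t) x = Bop v x + (-1) * Bop w x"
        by (rule Bop_lin[OF cv cw])
      ultimately show False using Bw unfolding e_def by simp
    qed
    then show "v \<in> Wset T u" unfolding Wset_def using vH by auto
  next
    fix v assume v: "v \<in> Wset T u"
    have vH: "v \<in> H10 T" and vW: "\<forall>x\<in>omega_c T u. Bop v x \<ge> 0" using v unfolding Wset_def by auto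
    have cv: "continuous_on UNIV v" by (rule H10_cont[OF vH T0])
    obtain gu where gu: "weak_deriv_L2 T vu gu" using vu(1) unfolding H10_def by auto
    define N where "N = h1_norm_sq T vu gu"
    have "\<exists>w\<in>Vset T u. \<exists>g. weak_deriv_L2 T (\<lambda>t. v t - w t) g \<and> h1_norm_sq T (\<lambda>t. v t - w t) g < e^2"
      if e: "e > 0" for e
    proof -
      define \<delta> where "\<delta> = e / (\<bar>N\<bar> + 1)"
      have \<delta>: "\<delta> > 0" unfolding \<delta>_def using e by simp
      define w where "w = (\<lambda>t. v t + (-\<delta>) * vu t)"
      have wH: "w \<in> H10 T" unfolding w_def by (rule H10_comb[OF vH vu(1)])
      have cw: "continuous_on UNIV w" by (rule H10_cont[OF wH T0])
      have Bw: "Bop w x = Bop v x + (-\<delta>) * Bop vu x" for x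
        unfolding w_def by (rule Bop_lin[OF cv cvu])
      have "\<exists>\<epsilon>0>0. \<forall>\<epsilon>. 0 < \<epsilon> \<and> \<epsilon> \<le> \<epsilon>0 \<longrightarrow> (\<forall>x\<in>{0..T-1}. Bop u x + \<epsilon> * Bop w x \<ge> 0)"
      proof (rule key)
        show "continuous_on {0..T-1} (Bop u)" by (rule Bop_cont[OF cu])
        show "continuous_on {0..T-1} (Bop w)" by (rule Bop_cont[OF cw])
        show "\<forall>x\<in>{0..T-1}. Bop u x \<ge> 0" by (rule uK)
        show "\<forall>x\<in>{0..T - 1}. Bop u x = 0 \<longrightarrow> 0 < Bop w x"
        proof (intro ballI impI)
          fix x assume xS: "x \<in> {0..T-1}" and z: "Bop u x = 0"
          then have "Bop v x \<ge> 0" using vW unfolding omega_c_def by auto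
          moreover have "Bop vu x = -1" using z Bu[of x] by simp
          ultimately show "0 < Bop w x" using Bw[of x] \<delta> by simp
        qed
      qed simp
      then obtain \<epsilon>0 where \<epsilon>0: "\<epsilon>0 > 0" "\<forall>\<epsilon>. 0 < \<epsilon> \<and> \<epsilon> \<le> \<epsilon>0 \<longrightarrow> (\<forall>x\<in>{0..T-1}. Bop u x + \<epsilon> * Bop w x \<ge> 0)"
        by blast
      define eps where "eps = (\<lambda>n. \<epsilon>0 * inverse (real (Suc n)))"
      have eps_pos: "\<forall>n. eps n > 0" unfolding eps_def using \<epsilon>0(1) by simp
      have eps_le: "eps n \<le> \<epsilon>0" for n
      proof -
        have "inverse (real (Suc n)) \<le> 1" by (rule inverse_le_1_iff[THEN iffD2]) simp
        then show ?thesis unfolding eps_def using \<epsilon>0(1) by (simp add: mult_left_le)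
      qed
      have eps_lim: "eps \<longlonglongrightarrow> 0"
        unfolding eps_def using tendsto_mult[OF tendsto_const LIMSEQ_inverse_real_of_nat, of \<epsilon>0] by simp
      have "\<forall>n. \<forall>x\<in>{0..T-1}. Bop (\<lambda>t. u t + eps n * w t) x \<ge> 0"
      proof (intro allI ballI)
        fix n x assume x: "x \<in> {0..T-1}"
        have "Bop (\<lambda>t. u t + eps n * w t) x = Bop u x + eps n * Bop w x" by (rule Bop_lin[OF cu cw])
        moreover have "0 \<le> Bop u x + eps n * Bop w x" using \<epsilon>0(2) eps_pos eps_le x by blast
        ultimately show "Bop (\<lambda>t. u t + eps n * w t) x \<ge> 0" by simp
      qed
      then have wV: "w \<in> Vset T u" unfolding Vset_def using wH eps_pos eps_lim by blast
      have vw: "(\<lambda>t. v t - w t) = (\<lambda>t. \<delta> * vu t)" unfolding w_def by auto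
      have wd: "weak_deriv_L2 T (\<lambda>t. v t - w t) (\<lambda>t. \<delta> * gu t)"
        unfolding vw by (rule wd_scale[OF gu])
      have "h1_norm_sq T (\<lambda>t. v t - w t) (\<lambda>t. \<delta> * gu t) = \<delta>^2 * N"
      proof -
        have e1: "(\<lambda>t. (\<delta> * vu t)^2) = (\<lambda>t. \<delta>^2 * (vu t)^2)" by (simp add: power_mult_distrib)
        have e2: "(\<lambda>t. (\<delta> * gu t)^2) = (\<lambda>t. \<delta>^2 * (gu t)^2)" by (simp add: power_mult_distrib)
        show ?thesis unfolding vw N_def h1_norm_sq_def e1 e2 set_integral_mult_right by (simp only: distrib_left)
      qed
      also have "\<dots> \<le> \<delta>^2 * \<bar>N\<bar>" by (intro mult_left_mono) auto
      also have "\<dots> < e^2"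
      proof -
        have "\<delta> * (\<bar>N\<bar> + 1) = e" unfolding \<delta>_def by simp
        have "(\<bar>N\<bar> + 1) \<le> (\<bar>N\<bar> + 1) * (\<bar>N\<bar> + 1)"
          using mult_left_mono[of 1 "\<bar>N\<bar> + 1" "\<bar>N\<bar> + 1"] by simp
        then have "\<bar>N\<bar> < (\<bar>N\<bar> + 1)^2" unfolding power2_eq_square by linarith
        then have "\<delta>^2 * \<bar>N\<bar> < \<delta>^2 * (\<bar>N\<bar> + 1)^2" using \<delta> by simp
        also have "\<dots> = e^2" using \<open>\<delta> * (\<bar>N\<bar> + 1) = e\<close> by (metis power_mult_distrib)
        finally show ?thesis .
      qed
      finally show ?thesis using wV wd by blast
    qed
    then show "v \<in> H10_closure T (Vset T u)" unfolding H10_closure_def using vH by blast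
  qed
qed

end
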